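(* For every conservative reaction network $(X,\mathscr{R})$ there exists an injective Lewis realization $x\mapsto\Gamma_x$, i.e. a Lewis realization in which distinct compounds $x\neq y$ are assigned non-isomorphic vertex-coloured multigraphs $\Gamma_x,\Gamma_y$.
   Context: A reaction network (RN) $(X,\mathscr{R})$ consists of a finite non-empty set $X$ of species and a finite non-empty set $\mathscr{R}$ of reactions. Each reaction $r$ is given by stoichiometric coefficients $s^-_{xr},s^+_{xr}\in\mathbb{N}_0$. The stoichiometric matrix $S\in\mathbb{Z}^{X\times\mathscr{R}}$ has entries $S_{xr}=s^+_{xr}-s^-_{xr}$. The paper assumes throughout that RNs are closed: every reaction $r$ has $x,y$ with $S_{xr}<0<S_{yr}$. The RN is conservative if there is $m\in\mathbb{R}^X$ with all entries positive and $m^\top S=0$. An sf-instance is a matrix $A\in\mathbb{N}_0^{\mathcal{A}\times X}$ ($\mathcal{A}$ a non-empty finite set) with every column nonzero and $AS=0$. An sf-realization is an sf-instance with $\operatorname{im}A^\top=\ker S^\top$. Given $\mathrm{val}:\mathcal{A}\to\mathbb{N}=\{1,2,\dots\}$, consider multigraphs (loops allowed) with vertex colouring $\alpha:V\to\mathcal{A}$. The degree $d(u)$ is the number of non-loop edge incidences at $u$ plus twice the number of loops at $u$. A Lewis instance assigns vertex-coloured multigraphs $\Gamma_x=(V_x,E_x,\alpha_x)$ to all $x\in X$ such that: - $d(u)=\mathrm{val}(\alpha_x(u))$ for all $u\in V_x$; - the matrix $A_{ax}=|\{u\in V_x:\alpha_x(u)=a\}|$ is an sf-instance. It is a Lewis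 realization if this $A$ is an sf-realization. *)

theory Defs
  imports Complex_Main "HOL-Library.Multiset"
begin

text \<open>A reaction network is given by finite non-empty carriers X (species) and R (reactions)
  and stoichiometric coefficients sm x r (= s^-_{xr}) and sp x r (= s^+_{xr}).\<close>

definition stoich :: "('x \<Rightarrow> 'r \<Rightarrow> nat) \<Rightarrow> ('x \<Rightarrow> 'r \<Rightarrow> nat) \<Rightarrow> 'x \<Rightarrow> 'r \<Rightarrow> int" where
  "stoich sm sp x r = int (sp x r) - int (sm x r)"

definition reaction_network :: "'x set \<Rightarrow> 'r set \<Rightarrow> bool" where
  "reaction_network X R \<longleftrightarrow> finite X \<and> X \<noteq> {} \<and> finite R \<and> R \<noteq> {}"

definition closed_RN :: "'x set \<Rightarrow> 'r set \<Rightarrow> ('x \<Rightarrow> 'r \<Rightarrow> nat) \<Rightarrow> ('x \<Rightarrow> 'r \<Rightarrow> nat) \<Rightarrow> bool" where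
  "closed_RN X R sm sp \<longleftrightarrow>
     (\<forall>r\<in>R. \<exists>x\<in>X. \<exists>y\<in>X. stoich sm sp x r < 0 \<and> 0 < stoich sm sp y r)"

definition conservative :: "'x set \<Rightarrow> 'r set \<Rightarrow> ('x \<Rightarrow> 'r \<Rightarrow> nat) \<Rightarrow> ('x \<Rightarrow> 'r \<Rightarrow> nat) \<Rightarrow> bool" where
  "conservative X R sm sp \<longleftrightarrow>
     (\<exists>m :: 'x \<Rightarrow> real. (\<forall>x\<in>X. 0 < m x) \<and>
        (\<forall>r\<in>R. (\<Sum>x\<in>X. m x * real_of_int (stoich sm sp x r)) = 0))"

definition sf_instance :: "'x set \<Rightarrow> 'r set \<Rightarrow> ('x \<Rightarrow> 'r \<Rightarrow> nat) \<Rightarrow> ('x \<Rightarrow> 'r \<Rightarrow> nat)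
    \<Rightarrow> 'a set \<Rightarrow> ('a \<Rightarrow> 'x \<Rightarrow> nat) \<Rightarrow> bool" where
  "sf_instance X R sm sp Atoms A \<longleftrightarrow>
     finite Atoms \<and> Atoms \<noteq> {} \<and>
     (\<forall>x\<in>X. \<exists>a\<in>Atoms. A a x \<noteq> 0) \<and>
     (\<forall>a\<in>Atoms. \<forall>r\<in>R. (\<Sum>x\<in>X. int (A a x) * stoich sm sp x r) = 0)"

definition sf_realization :: "'x set \<Rightarrow> 'r set \<Rightarrow> ('x \<Rightarrow> 'r \<Rightarrow> nat) \<Rightarrow> ('x \<Rightarrow> 'r \<Rightarrow> nat)
    \<Rightarrow> 'a set \<Rightarrow> ('a \<Rightarrow> 'x \<Rightarrow> nat) \<Rightarrow> bool" where
  "sf_realization X R sm sp Atoms A \<longleftrightarrow>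
     sf_instance X R sm sp Atoms A \<and>
     (\<forall>v :: 'x \<Rightarrow> real.
        (\<exists>y :: 'a \<Rightarrow> real. \<forall>x\<in>X. v x = (\<Sum>a\<in>Atoms. y a * real (A a x)))
        \<longleftrightarrow> (\<forall>r\<in>R. (\<Sum>x\<in>X. v x * real_of_int (stoich sm sp x r)) = 0))"

text \<open>Edges form a multiset of 2-element multisets of vertices; a loop at u is {#u,u#}.\<close>

record ('v, 'a) cmgraph =
  verts :: "'v set"
  edges :: "'v multiset multiset"
  colour :: "'v \<Rightarrow> 'a"

definition wf_cmgraph :: "('v, 'a) cmgraph \<Rightarrow> bool" where
  "wf_cmgraph G \<longleftrightarrow> finite (verts G) \<and>
     (\<forall>e\<in>#edges G. size e = 2 \<and> set_mset e \<subseteq> verts G)"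

text \<open>Degree: non-loop incidences plus twice the number of loops.\<close>

definition degree :: "('v, 'a) cmgraph \<Rightarrow> 'v \<Rightarrow> nat" where
  "degree G u = (\<Sum>e\<in>#edges G. count e u)"

definition cmg_iso :: "('v, 'a) cmgraph \<Rightarrow> ('v, 'a) cmgraph \<Rightarrow> bool" where
  "cmg_iso G H \<longleftrightarrow> (\<exists>f. bij_betw f (verts G) (verts H) \<and>
      (\<forall>u\<in>verts G. colour H (f u) = colour G u) \<and>
      image_mset (image_mset f) (edges G) = edges H)"

definition lewis_matrix :: "('x \<Rightarrow> ('v, 'a) cmgraph) \<Rightarrow> 'a \<Rightarrow> 'x \<Rightarrow> nat" where
  "lewis_matrix \<Gamma> a x = card {u \<in> verts (\<Gamma> x). colour (\<Gamma> x) u = a}"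

definition lewis_instance :: "'x set \<Rightarrow> 'r set \<Rightarrow> ('x \<Rightarrow> 'r \<Rightarrow> nat) \<Rightarrow> ('x \<Rightarrow> 'r \<Rightarrow> nat)
    \<Rightarrow> 'a set \<Rightarrow> ('a \<Rightarrow> nat) \<Rightarrow> ('x \<Rightarrow> ('v, 'a) cmgraph) \<Rightarrow> bool" where
  "lewis_instance X R sm sp Atoms val \<Gamma> \<longleftrightarrow>
     (\<forall>a\<in>Atoms. 1 \<le> val a) \<and>
     (\<forall>x\<in>X. wf_cmgraph (\<Gamma> x) \<and> colour (\<Gamma> x) ` verts (\<Gamma> x) \<subseteq> Atoms \<and>
        (\<forall>u\<in>verts (\<Gamma> x). degree (\<Gamma> x) u = val (colour (\<Gamma> x) u))) \<and>
     sf_instance X R sm sp Atoms (lewis_matrix \<Gamma>)"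

definition lewis_realization :: "'x set \<Rightarrow> 'r set \<Rightarrow> ('x \<Rightarrow> 'r \<Rightarrow> nat) \<Rightarrow> ('x \<Rightarrow> 'r \<Rightarrow> nat)
    \<Rightarrow> 'a set \<Rightarrow> ('a \<Rightarrow> nat) \<Rightarrow> ('x \<Rightarrow> ('v, 'a) cmgraph) \<Rightarrow> bool" where
  "lewis_realization X R sm sp Atoms val \<Gamma> \<longleftrightarrow>
     lewis_instance X R sm sp Atoms val \<Gamma> \<and>
     sf_realization X R sm sp Atoms (lewis_matrix \<Gamma>)"

end

theory Submission imports Defs "HOL-Library.Nat_Bijection" begin

lemma int_span:
  fixes X :: "'x set" and Rs :: "'r set" and c :: "'x \<Rightarrow> 'r \<Rightarrow> int"
  assumes "finite X" "finite Rs"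
  shows "\<exists>n (W::nat \<Rightarrow> 'x \<Rightarrow> int). (\<forall>i<n. \<forall>r\<in>Rs. (\<Sum>x\<in>X. W i x * c x r) = 0) \<and>
     (\<forall>v::'x\<Rightarrow>real. (\<forall>r\<in>Rs. (\<Sum>x\<in>X. v x * of_int (c x r)) = 0) \<longrightarrow>
        (\<exists>t::nat\<Rightarrow>real. \<forall>x\<in>X. v x = (\<Sum>i<n. t i * of_int (W i x))))"
  using assms(2)
proof (induction Rs rule: finite_induct)
  case empty
  obtain e where e: "bij_betw e {0..<card X} X" using ex_bij_betw_nat_finite[OF assms(1)] by blast
  define W where "W = (\<lambda>i x. if x = e i then (1::int) else 0)"
  have "\<forall>v::'x\<Rightarrow>real. \<exists>t::nat\<Rightarrow>real. \<forall>x\<in>X. v x = (\<Sum>i<card X. t i * of_int (W i x))"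
  proof (intro allI exI ballI)
    fix v :: "'x \<Rightarrow> real" and x assume x: "x \<in> X"
    have "(\<Sum>i<card X. v (e i) * of_int (W i x)) = (\<Sum>i\<in>{0..<card X}. (\<lambda>y. v y * (if x = y then 1 else 0)) (e i))"
      by (auto simp: W_def lessThan_atLeast0 intro!: sum.cong)
    also have "\<dots> = (\<Sum>y\<in>X. v y * (if x = y then 1 else 0))"
      by (rule sum.reindex_bij_betw[OF e])
    also have "\<dots> = v x" using x assms(1) by (simp add: if_distrib cong: if_cong)
    finally show "v x = (\<Sum>i<card X. v (e i) * of_int (W i x))" by simp
  qed
  then show ?case by blast
next
  case (insert r Rs)
  then obtain n W where W1: "\<forall>i<n. \<forall>r\<in>Rs. (\<Sum>x\<in>X. W i x * c x r) = 0"
    and W2: "\<forall>v::'x\<Rightarrow>real. (\<forall>r\<in>Rs. (\<Sum>x\<in>X. v x * of_int (c x r)) = 0) \<longrightarrow>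
        (\<exists>t::nat\<Rightarrow>real. \<forall>x\<in>X. v x = (\<Sum>i<n. t i * of_int (W i x)))" by blast
  define cc where "cc i = (\<Sum>x\<in>X. W i x * c x r)" for i
  show ?case
  proof (cases "\<forall>i<n. cc i = 0")
    case True
    show ?thesis
      apply (rule exI[of _ n], rule exI[of _ W])
      using True W1 W2 by (auto simp: cc_def)
  next
    case False
    then obtain j where j: "j < n" "cc j \<noteq> 0" by blast
    define W' where "W' i x = cc j * W i x - cc i * W j x" for i x
    have A: "\<forall>i<n. \<forall>r'\<in>insert r Rs. (\<Sum>x\<in>X. W' i x * c x r') = 0"
    proof (intro allI impI ballI)
      fix i r' assume i: "i < n" and r': "r' \<in> insert r Rs"
      have "(\<Sum>x\<in>X. W' i x * c x r') = cc j * (\<Sum>x\<in>X. W i x * c x r') - cc i * (\<Sum>x\<in>X. W j x * c x r')"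
        by (simp add: W'_def sum_distrib_left sum_subtractf algebra_simps)
      then show "(\<Sum>x\<in>X. W' i x * c x r') = 0"
        using r' W1 i j(1) by (auto simp: cc_def)
    qed
    have B: "\<exists>t::nat\<Rightarrow>real. \<forall>x\<in>X. v x = (\<Sum>i<n. t i * of_int (W' i x))"
      if v: "\<forall>r'\<in>insert r Rs. (\<Sum>x\<in>X. v x * of_int (c x r')) = 0" for v :: "'x \<Rightarrow> real"
    proof -
      obtain t where t: "\<forall>x\<in>X. v x = (\<Sum>i<n. t i * of_int (W i x))" using W2 v by blast
      have "0 = (\<Sum>x\<in>X. v x * of_int (c x r))" using v by auto
      also have "\<dots> = (\<Sum>x\<in>X. (\<Sum>i<n. t i * of_int (W i x)) * of_int (c x r))"
        using t by (intro sum.cong) auto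
      also have "\<dots> = (\<Sum>i<n. t i * of_int (cc i))"
        by (simp add: cc_def sum_distrib_right sum_distrib_left mult.assoc) (rule sum.swap)
      finally have S: "(\<Sum>i<n. t i * of_int (cc i)) = 0" by simp
      show ?thesis
      proof (intro exI[of _ "\<lambda>i. t i / of_int (cc j)"] ballI)
        fix x assume x: "x \<in> X"
        have "(\<Sum>i<n. t i / of_int (cc j) * of_int (W' i x))
            = (\<Sum>i<n. t i * of_int (W i x)) - (\<Sum>i<n. t i * of_int (cc i)) / of_int (cc j) * of_int (W j x)"
        proof -
          have "(\<Sum>i<n. t i / of_int (cc j) * of_int (W' i x))
              = (\<Sum>i<n. t i * of_int (W i x) - t i * of_int (cc i) / of_int (cc j) * of_int (W j x))"
            using j(2) by (intro sum.cong) (auto simp: W'_def field_simps)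
          also have "\<dots> = (\<Sum>i<n. t i * of_int (W i x)) - (\<Sum>i<n. t i * of_int (cc i)) / of_int (cc j) * of_int (W j x)"
            by (simp add: sum_subtractf sum_divide_distrib sum_distrib_right)
          finally show ?thesis .
        qed
        then show "v x = (\<Sum>i<n. t i / of_int (cc j) * of_int (W' i x))" using S t x by simp
      qed
    qed
    show ?thesis using A B by blast
  qed
qed


lemma pos_int:
  fixes X :: "'x set" and Rs :: "'r set" and c :: "'x \<Rightarrow> 'r \<Rightarrow> int"
    and W :: "nat \<Rightarrow> 'x \<Rightarrow> int" and m :: "'x \<Rightarrow> real"
  assumes X: "finite X" "X \<noteq> {}"
    and W: "\<forall>i<n. \<forall>r\<in>Rs. (\<Sum>x\<in>X. W i x * c x r) = 0"
    and mpos: "\<forall>x\<in>X. 0 < m x"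
    and t: "\<forall>x\<in>X. m x = (\<Sum>i<n. t i * of_int (W i x))"
  shows "\<exists>p::'x\<Rightarrow>int. (\<forall>x\<in>X. 0 < p x) \<and> (\<forall>r\<in>Rs. (\<Sum>x\<in>X. p x * c x r) = 0)"
proof -
  define C where "C = (\<Sum>x\<in>X. \<Sum>i<n. \<bar>real_of_int (W i x)\<bar>)"
  define \<mu> where "\<mu> = Min (m ` X)"
  have mu: "0 < \<mu>" unfolding \<mu>_def using X mpos by (subst Min_gr_iff) auto
  have mule: "\<mu> \<le> m x" if "x \<in> X" for x unfolding \<mu>_def using X that by auto
  obtain K :: nat where K: "C < real K * \<mu>" using ex_less_of_nat_mult[OF mu] by blast
  define p where "p x = (\<Sum>i<n. \<lfloor>real K * t i\<rfloor> * W i x)" for x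
  have "0 < p x" if x: "x \<in> X" for x
  proof -
    have "real_of_int (p x) = (\<Sum>i<n. real K * t i * of_int (W i x))
        + (\<Sum>i<n. (of_int \<lfloor>real K * t i\<rfloor> - real K * t i) * of_int (W i x))"
      by (simp add: p_def sum.distrib[symmetric] algebra_simps)
    also have "(\<Sum>i<n. real K * t i * of_int (W i x)) = real K * m x"
      using t x by (simp add: sum_distrib_left mult.assoc)
    finally have eq: "real_of_int (p x) = real K * m x + (\<Sum>i<n. (of_int \<lfloor>real K * t i\<rfloor> - real K * t i) * of_int (W i x))" .
    have "\<bar>\<Sum>i<n. (of_int \<lfloor>real K * t i\<rfloor> - real K * t i) * of_int (W i x)\<bar>
        \<le> (\<Sum>i<n. \<bar>(of_int \<lfloor>real K * t i\<rfloor> - real K * t i) * of_int (W i x)\<bar>)"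
      by (rule sum_abs)
    also have "\<dots> \<le> (\<Sum>i<n. \<bar>real_of_int (W i x)\<bar>)"
    proof (rule sum_mono)
      fix i
      have "\<bar>of_int \<lfloor>real K * t i\<rfloor> - real K * t i\<bar> \<le> 1"
        by (smt (verit) of_int_floor_le real_of_int_floor_gt_diff_one)
      then show "\<bar>(of_int \<lfloor>real K * t i\<rfloor> - real K * t i) * of_int (W i x)\<bar> \<le> \<bar>real_of_int (W i x)\<bar>"
        by (simp add: abs_mult mult_left_le_one_le)
    qed
    also have "\<dots> \<le> C" unfolding C_def
      using member_le_sum[of x X "\<lambda>x. \<Sum>i<n. \<bar>real_of_int (W i x)\<bar>"] x X by (auto intro: sum_nonneg)
    finally have b: "\<bar>\<Sum>i<n. (of_int \<lfloor>real K * t i\<rfloor> - real K * t i) * of_int (W i x)\<bar> \<le> C" .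
    have "real K * \<mu> \<le> real K * m x" using mule[OF x] by (simp add: mult_left_mono)
    then have "0 < real_of_int (p x)" using eq b K by linarith
    then show ?thesis by simp
  qed
  moreover have "(\<Sum>x\<in>X. p x * c x r) = 0" if r: "r \<in> Rs" for r
  proof -
    have "(\<Sum>x\<in>X. p x * c x r) = (\<Sum>i<n. \<lfloor>real K * t i\<rfloor> * (\<Sum>x\<in>X. W i x * c x r))"
      by (simp add: p_def sum_distrib_right sum_distrib_left mult.assoc) (rule sum.swap)
    also have "\<dots> = 0" using W r by simp
    finally show ?thesis .
  qed
  ultimately show ?thesis by blast
qed


definition loopset :: "(nat, nat) cmgraph \<Rightarrow> nat set" where
  "loopset G = {u\<in>verts G. colour G u = 0 \<and> {#u,u#} \<in># edges G}"

lemma sum_mset_mset_set: "finite S \<Longrightarrow> (\<Sum>e\<in>#image_mset g (mset_set S). f e) = (\<Sum>s\<in>S. f (g s))"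
  by (induction S rule: finite_induct) auto

lemma graph_exists:
  fixes A :: "nat \<Rightarrow> nat" and I n :: nat
  assumes "2*I \<le> A 0" and "even (A 0)"
  shows "\<exists>G :: (nat,nat) cmgraph. wf_cmgraph G \<and> colour G ` verts G \<subseteq> {..n} \<and>
     (\<forall>u\<in>verts G. degree G u = 2) \<and> (\<forall>a\<le>n. card {u\<in>verts G. colour G u = a} = A a) \<and>
     card (loopset G) = 2*I"
proof -
  define V where "V = prod_encode ` (SIGMA a:{..n}. {..<A a})"
  define Lp where "Lp = prod_encode ` ((SIGMA a:{1..n}. {..<A a}) \<union> ({0} \<times> {..<2*I}))"
  define P where "P = {I..<A 0 div 2}"
  define pe where "pe k = {#prod_encode(0,2*k), prod_encode(0,2*k+1)#}" for k
  define E where "E = image_mset (\<lambda>u. {#u,u#}) (mset_set Lp) + image_mset pe (mset_set P) + image_mset pe (mset_set P)"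
  define G :: "(nat,nat) cmgraph" where "G = \<lparr>verts = V, edges = E, colour = (\<lambda>u. fst (prod_decode u))\<rparr>"
  have finLp: "finite Lp" unfolding Lp_def by auto
  have finP: "finite P" unfolding P_def by auto
  have LpV: "Lp \<subseteq> V" unfolding Lp_def V_def using assms by (auto simp: image_iff)
  have peV: "set_mset (pe k) \<subseteq> V" if "k \<in> P" for k
    using that assms unfolding P_def pe_def V_def by (auto simp: image_iff)
  have wf: "wf_cmgraph G"
    unfolding wf_cmgraph_def G_def using LpV peV finLp finP by (auto simp: V_def E_def pe_def)
  have col: "colour G ` verts G \<subseteq> {..n}" by (auto simp: G_def V_def)
  have deg: "degree G u = 2" if u: "u \<in> verts G" for u
  proof -
    have "degree G u = (\<Sum>s\<in>Lp. count {#s,s#} u) + 2 * (\<Sum>k\<in>P. count (pe k) u)"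
      unfolding degree_def G_def E_def using finLp finP by (simp add: sum_mset_mset_set)
    also have "(\<Sum>s\<in>Lp. count {#s,s#} u) = (\<Sum>s\<in>Lp. if s = u then 2 else 0)"
      by (intro sum.cong) auto
    also have "\<dots> = (if u \<in> Lp then 2 else 0)" using finLp by simp
    finally have d: "degree G u = (if u \<in> Lp then 2 else 0) + 2 * (\<Sum>k\<in>P. count (pe k) u)" .
    from u obtain a j where aj: "u = prod_encode (a,j)" "a \<le> n" "j < A a" by (auto simp: G_def V_def)
    have cpe: "count (pe k) u = (if a = 0 \<and> k = j div 2 then 1 else 0)" for k
      unfolding pe_def aj by (auto simp: prod_encode_eq)
    have "(\<Sum>k\<in>P. count (pe k) u) = (\<Sum>k\<in>P. if k = j div 2 \<and> a = 0 then 1 else 0)"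
      by (intro sum.cong) (auto simp: cpe)
    also have "\<dots> = (if j div 2 \<in> P \<and> a = 0 then 1 else 0)" using finP by (auto simp: sum.delta)
    finally have s: "(\<Sum>k\<in>P. count (pe k) u) = (if j div 2 \<in> P \<and> a = 0 then 1 else 0)" .
    have inLp: "u \<in> Lp \<longleftrightarrow> (1 \<le> a \<or> j < 2*I)"
      unfolding Lp_def aj using aj by (auto simp: prod_encode_eq inj_on_def image_iff)
    have inP: "j div 2 \<in> P \<longleftrightarrow> 2*I \<le> j" if "a = 0"
      unfolding P_def using aj that assms by auto
    show ?thesis using d s inLp inP by (cases "a = 0") auto
  qed
  have cnt: "card {u\<in>verts G. colour G u = a} = A a" if a: "a \<le> n" for a
  proof -
    have "{u\<in>verts G. colour G u = a} = prod_encode ` ({a} \<times> {..<A a})"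
      using a by (auto simp: G_def V_def)
    also have "card \<dots> = A a" by (subst card_image) (auto intro: inj_on_subset[OF inj_prod_encode] simp: card_cartesian_product)
    finally show ?thesis .
  qed
  have pe_nl: "pe k \<noteq> {#s,s#}" for k s
  proof
    assume "pe k = {#s,s#}"
    then have "set_mset (pe k) = {s}" by simp
    then show False unfolding pe_def by (auto simp: prod_encode_eq insert_eq_iff)
  qed
  have "loopset G = prod_encode ` ({0} \<times> {..<2*I})"
  proof -
    have "{#u,u#} \<in># E \<longleftrightarrow> u \<in> Lp" for u
    proof
      assume "{#u,u#} \<in># E"
      then consider x where "x \<in> Lp" "{#u,u#} = {#x,x#}" | x where "x \<in> P" "{#u,u#} = pe x"
        using finLp finP by (auto simp: E_def)
      then show "u \<in> Lp"
      proof cases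
        case 1
        have "u \<in># {#u,u#}" by simp
        then have "u \<in># {#x,x#}" by (simp only: 1(2))
        then have "u = x" by simp
        then show ?thesis using 1(1) by simp
      next
        case 2
        then show ?thesis using pe_nl[of x u] by simp
      qed
    next
      assume "u \<in> Lp" then show "{#u,u#} \<in># E" using finLp by (auto simp: E_def)
    qed
    then show ?thesis unfolding loopset_def using LpV assms
      by (auto simp: G_def Lp_def V_def image_iff prod_encode_eq)
  qed
  then have "card (loopset G) = 2*I"
    by (simp only:) (subst card_image, auto intro: inj_on_subset[OF inj_prod_encode] simp: card_cartesian_product)
  then show ?thesis using wf col deg cnt by blast
qed

lemma iso_loopset:
  assumes "cmg_iso G H" "wf_cmgraph G" "wf_cmgraph H"
  shows "card (loopset G) = card (loopset H)"
proof -
  obtain f where f: "bij_betw f (verts G) (verts H)" "\<forall>u\<in>verts G. colour H (f u) = colour G u"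
    "image_mset (image_mset f) (edges G) = edges H" using assms(1) unfolding cmg_iso_def by blast
  have inj: "inj_on f (verts G)" using f(1) bij_betw_def by blast
  have "f ` loopset G = loopset H"
  proof
    show "f ` loopset G \<subseteq> loopset H"
    proof
      fix w assume "w \<in> f ` loopset G"
      then obtain u where u: "u \<in> verts G" "colour G u = 0" "{#u,u#} \<in># edges G" "w = f u"
        unfolding loopset_def by auto
      have "image_mset f {#u,u#} \<in># edges H" by (metis f(3) image_eqI set_image_mset u(3))
      then show "w \<in> loopset H" using u f(1,2) unfolding loopset_def bij_betw_def by auto
    qed
  next
    show "loopset H \<subseteq> f ` loopset G"
    proof
      fix w assume "w \<in> loopset H"
      then have w: "w \<in> verts H" "colour H w = 0" "{#w,w#} \<in># edges H" unfolding loopset_def by auto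
      then obtain e where e: "e \<in># edges G" "image_mset f e = {#w,w#}" using f(3) by (metis imageE set_image_mset)
      have "size e = 2" "set_mset e \<subseteq> verts G" using e(1) assms(2) unfolding wf_cmgraph_def by auto
      then have "size e = Suc 1" by simp
      then obtain v1 e' where e1: "e = add_mset v1 e'"
        using size_eq_Suc_imp_eq_union by blast
      then have "size e' = 1" using \<open>size e = 2\<close> by simp
      then obtain v2 where "e' = {#v2#}" using size_1_singleton_mset by blast
      then have e12: "e = {#v1,v2#}" using e1 by simp
      have v: "v1 \<in> verts G" "v2 \<in> verts G" using \<open>set_mset e \<subseteq> verts G\<close> e12 by auto
      have "set_mset (image_mset f e) = {w}" using e(2) by simp
      then have "f v1 = w" "f v2 = w" using e12 by auto
      then have "v1 = v2" using inj v by (auto simp: inj_on_def)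
      then have "{#v1,v1#} \<in># edges G" using e e12 by simp
      moreover have "colour G v1 = 0" using f(2) v \<open>f v1 = w\<close> w(2) by auto
      ultimately show "w \<in> f ` loopset G" using v \<open>f v1 = w\<close> unfolding loopset_def by auto
    qed
  qed
  moreover have "inj_on f (loopset G)" using inj by (rule inj_on_subset) (auto simp: loopset_def)
  ultimately show ?thesis by (metis card_image)
qed

theorem proposition14:
  fixes X :: "'x set" and R :: "'r set" and sm sp :: "'x \<Rightarrow> 'r \<Rightarrow> nat"
  assumes "reaction_network X R"
    and "closed_RN X R sm sp"
    and "conservative X R sm sp"
  shows "\<exists>(Atoms :: nat set) (val :: nat \<Rightarrow> nat) (\<Gamma> :: 'x \<Rightarrow> (nat, nat) cmgraph).
           lewis_realization X R sm sp Atoms val \<Gamma> \<and>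
           (\<forall>x\<in>X. \<forall>y\<in>X. x \<noteq> y \<longrightarrow> \<not> cmg_iso (\<Gamma> x) (\<Gamma> y))"
proof -
  let ?S = "stoich sm sp"
  have fX: "finite X" "X \<noteq> {}" and fR: "finite R" using assms(1) unfolding reaction_network_def by auto
  obtain n W where W1: "\<forall>i<n. \<forall>r\<in>R. (\<Sum>x\<in>X. W i x * ?S x r) = 0"
    and W2: "\<forall>v::'x\<Rightarrow>real. (\<forall>r\<in>R. (\<Sum>x\<in>X. v x * of_int (?S x r)) = 0) \<longrightarrow>
        (\<exists>t::nat\<Rightarrow>real. \<forall>x\<in>X. v x = (\<Sum>i<n. t i * of_int (W i x)))"
    using int_span[OF fX(1) fR, of ?S] by blast
  obtain m where m: "\<forall>x\<in>X. 0 < m x" "\<forall>r\<in>R. (\<Sum>x\<in>X. m x * real_of_int (?S x r)) = 0"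
    using assms(3) unfolding conservative_def by blast
  obtain t where t: "\<forall>x\<in>X. m x = (\<Sum>i<n. t i * of_int (W i x))" using W2 m(2) by blast
  obtain p where p: "\<forall>x\<in>X. 0 < p x" "\<forall>r\<in>R. (\<Sum>x\<in>X. p x * ?S x r) = 0"
    using pos_int[OF fX W1 m(1) t] by blast
  define N :: int where "N = 1 + (\<Sum>x\<in>X. \<Sum>i<n. \<bar>W i x\<bar>)"
  define Mc :: nat where "Mc = 2 * card X"
  have Mc: "0 < Mc" using fX by (simp add: Mc_def card_gt_0_iff)
  define Af where "Af a x = (if a = 0 then nat (int Mc * p x) else nat (W (a-1) x + N * p x))" for a x
  have Wle: "\<bar>W i x\<bar> \<le> N - 1" if "x \<in> X" "i < n" for i x
  proof -
    have "\<bar>W i x\<bar> \<le> (\<Sum>i<n. \<bar>W i x\<bar>)" using that by (intro member_le_sum) auto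
    also have "\<dots> \<le> (\<Sum>x\<in>X. \<Sum>i<n. \<bar>W i x\<bar>)" using that fX by (intro member_le_sum) (auto intro: sum_nonneg)
    finally show ?thesis by (simp add: N_def)
  qed
  have Npos: "1 \<le> N" unfolding N_def by (auto intro!: sum_nonneg)
  have Aint0: "int (Af 0 x) = int Mc * p x" if "x \<in> X" for x
  proof -
    have "0 \<le> int Mc * p x" using p(1) that by (simp add: less_imp_le)
    then show ?thesis by (simp add: Af_def)
  qed
  have AintS: "int (Af (Suc i) x) = W i x + N * p x" if "x \<in> X" "i < n" for x i
  proof -
    have "1 \<le> p x" using p(1) that by (simp add: int_one_le_iff_zero_less)
    then have "N \<le> N * p x" using Npos by (simp add: mult_le_cancel_left1)
    then have "0 \<le> W i x + N * p x" using Wle[OF that] by linarith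
    then show ?thesis by (simp add: Af_def)
  qed
  obtain idx where idx: "bij_betw idx X {0..<card X}" using ex_bij_betw_finite_nat[OF fX(1)] by blast
  define P where "P x G \<longleftrightarrow> wf_cmgraph G \<and> colour G ` verts G \<subseteq> {..n} \<and>
     (\<forall>u\<in>verts G. degree G u = 2) \<and> (\<forall>a\<le>n. card {u\<in>verts G. colour G u = a} = Af a x) \<and>
     card (loopset G) = 2 * idx x" for x and G :: "(nat,nat) cmgraph"
  define \<Gamma> where "\<Gamma> x = (SOME G. P x G)" for x
  have \<Gamma>: "P x (\<Gamma> x)" if x: "x \<in> X" for x
  proof -
    have "idx x < card X" using idx x by (auto simp: bij_betw_def)
    moreover have "1 \<le> p x" using p(1) x by (simp add: int_one_le_iff_zero_less)
    ultimately have "int (2 * idx x) < int Mc" "int Mc \<le> int Mc * p x"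
      by (simp_all add: Mc_def mult_le_cancel_left1)
    then have "int (2 * idx x) \<le> int (Af 0 x)" using Aint0[OF x] by linarith
    then have h1: "2 * idx x \<le> (\<lambda>a. Af a x) 0" by simp
    have "Af 0 x = 2 * nat (int (card X) * p x)" using p(1) x by (simp add: Af_def Mc_def nat_mult_distrib)
    then have h2: "even ((\<lambda>a. Af a x) 0)" by simp
    obtain G where "wf_cmgraph G \<and> colour G ` verts G \<subseteq> {..n} \<and>
     (\<forall>u\<in>verts G. degree G u = 2) \<and> (\<forall>a\<le>n. card {u\<in>verts G. colour G u = a} = (\<lambda>a. Af a x) a) \<and>
     card (loopset G) = 2 * idx x" using graph_exists[of "idx x" "\<lambda>a. Af a x" n, OF h1 h2] by blast
    then have "P x G" unfolding P_def by simp
    then show ?thesis unfolding \<Gamma>_def by (rule someI)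
  qed
  have LM: "lewis_matrix \<Gamma> a x = Af a x" if "x \<in> X" "a \<le> n" for a x
    using \<Gamma>[OF that(1)] that(2) unfolding P_def lewis_matrix_def by blast
  define Atoms :: "nat set" where "Atoms = {..n}"
  have kern: "(\<Sum>x\<in>X. int (lewis_matrix \<Gamma> a x) * ?S x r) = 0" if a: "a \<in> Atoms" and r: "r \<in> R" for a r
  proof (cases a)
    case 0
    have "(\<Sum>x\<in>X. int (lewis_matrix \<Gamma> a x) * ?S x r) = (\<Sum>x\<in>X. int Mc * (p x * ?S x r))"
      using a 0 by (intro sum.cong) (auto simp: LM Aint0 Atoms_def)
    also have "\<dots> = 0" using p(2) r by (simp add: sum_distrib_left[symmetric])
    finally show ?thesis .
  next
    case (Suc i)
    have i: "i < n" using a Suc by (auto simp: Atoms_def)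
    have "(\<Sum>x\<in>X. int (lewis_matrix \<Gamma> a x) * ?S x r) = (\<Sum>x\<in>X. W i x * ?S x r) + N * (\<Sum>x\<in>X. p x * ?S x r)"
      using a Suc i by (auto simp: LM AintS Atoms_def sum_distrib_left sum.distrib[symmetric] algebra_simps intro!: sum.cong)
    also have "\<dots> = 0" using p(2) r W1 i by simp
    finally show ?thesis .
  qed
  have inst: "sf_instance X R sm sp Atoms (lewis_matrix \<Gamma>)"
    unfolding sf_instance_def
  proof (intro conjI ballI)
    show "finite Atoms" "Atoms \<noteq> {}" by (auto simp: Atoms_def)
  next
    fix x assume x: "x \<in> X"
    have "0 < int Mc * p x" using Mc p(1) x by simp
    then have "lewis_matrix \<Gamma> 0 x \<noteq> 0" using LM[OF x, of 0] Aint0[OF x] by linarith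
    then show "\<exists>a\<in>Atoms. lewis_matrix \<Gamma> a x \<noteq> 0" by (auto simp: Atoms_def)
  qed (rule kern)
  have real: "sf_realization X R sm sp Atoms (lewis_matrix \<Gamma>)"
    unfolding sf_realization_def
  proof (intro conjI allI iffI inst)
    fix v :: "'x \<Rightarrow> real"
    assume "\<exists>y. \<forall>x\<in>X. v x = (\<Sum>a\<in>Atoms. y a * real (lewis_matrix \<Gamma> a x))"
    then obtain y where y: "\<forall>x\<in>X. v x = (\<Sum>a\<in>Atoms. y a * real (lewis_matrix \<Gamma> a x))" by blast
    show "\<forall>r\<in>R. (\<Sum>x\<in>X. v x * real_of_int (?S x r)) = 0"
    proof
      fix r assume r: "r \<in> R"
      have "(\<Sum>x\<in>X. v x * real_of_int (?S x r)) = (\<Sum>x\<in>X. \<Sum>a\<in>Atoms. y a * (real (lewis_matrix \<Gamma> a x) * real_of_int (?S x r)))"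
        using y by (auto simp: sum_distrib_right mult.assoc intro!: sum.cong)
      also have "\<dots> = (\<Sum>a\<in>Atoms. y a * real_of_int (\<Sum>x\<in>X. int (lewis_matrix \<Gamma> a x) * ?S x r))"
        by (subst sum.swap) (simp add: sum_distrib_left)
      also have "\<dots> = 0" using kern r by simp
      finally show "(\<Sum>x\<in>X. v x * real_of_int (?S x r)) = 0" .
    qed
  next
    fix v :: "'x \<Rightarrow> real"
    assume "\<forall>r\<in>R. (\<Sum>x\<in>X. v x * real_of_int (?S x r)) = 0"
    then obtain s where s: "\<forall>x\<in>X. v x = (\<Sum>i<n. s i * of_int (W i x))" using W2 by blast
    define y where "y a = (if a = 0 then - (real_of_int N * (\<Sum>i<n. s i)) / real Mc else s (a - 1))" for a
    show "\<exists>y. \<forall>x\<in>X. v x = (\<Sum>a\<in>Atoms. y a * real (lewis_matrix \<Gamma> a x))"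
    proof (intro exI ballI)
      fix x assume x: "x \<in> X"
      have "(\<Sum>a\<in>Atoms. y a * real (lewis_matrix \<Gamma> a x)) = (\<Sum>a<Suc n. y a * real (Af a x))"
        unfolding Atoms_def lessThan_Suc_atMost using x by (intro sum.cong) (auto simp: LM)
      also have "\<dots> = y 0 * real (Af 0 x) + (\<Sum>i<n. y (Suc i) * real (Af (Suc i) x))"
        by (rule sum.lessThan_Suc_shift)
      also have "\<dots> = y 0 * (real Mc * of_int (p x)) + (\<Sum>i<n. s i * (of_int (W i x) + of_int N * of_int (p x)))"
      proof -
        have "real (Af 0 x) = real Mc * of_int (p x)"
          using Aint0[OF x] by (metis of_int_mult of_int_of_nat_eq)
        moreover have "(\<Sum>i<n. y (Suc i) * real (Af (Suc i) x)) = (\<Sum>i<n. s i * (of_int (W i x) + of_int N * of_int (p x)))"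
        proof (intro sum.cong refl)
          fix i assume "i \<in> {..<n}"
          then have "real (Af (Suc i) x) = of_int (W i x) + of_int N * of_int (p x)"
            using AintS[OF x] by (metis lessThan_iff of_int_add of_int_mult of_int_of_nat_eq)
          then show "y (Suc i) * real (Af (Suc i) x) = s i * (of_int (W i x) + of_int N * of_int (p x))"
            by (simp add: y_def)
        qed
        ultimately show ?thesis by simp
      qed
      also have "\<dots> = v x"
      proof -
        have e1: "(\<Sum>i<n. s i * (of_int (W i x) + of_int N * of_int (p x)))
           = (\<Sum>i<n. s i * of_int (W i x)) + (of_int N * of_int (p x)) * sum s {..<n}"
          by (simp add: distrib_left sum.distrib sum_distrib_right mult.commute)
        have e2: "y 0 * (real Mc * of_int (p x)) = - (of_int N * of_int (p x)) * sum s {..<n}"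
          using Mc by (simp add: y_def)
        show ?thesis using e1 e2 s x by simp
      qed
      finally show "v x = (\<Sum>a\<in>Atoms. y a * real (lewis_matrix \<Gamma> a x))" by simp
    qed
  qed
  have linst: "lewis_instance X R sm sp Atoms (\<lambda>_. 2) \<Gamma>"
    unfolding lewis_instance_def using inst \<Gamma> by (auto simp: P_def Atoms_def)
  have inj: "\<not> cmg_iso (\<Gamma> x) (\<Gamma> y)" if "x \<in> X" "y \<in> X" "x \<noteq> y" for x y
  proof
    assume "cmg_iso (\<Gamma> x) (\<Gamma> y)"
    then have "card (loopset (\<Gamma> x)) = card (loopset (\<Gamma> y))"
      using iso_loopset \<Gamma> that unfolding P_def by blast
    then have "idx x = idx y" using \<Gamma> that unfolding P_def by simp
    then show False using idx that by (auto simp: bij_betw_def inj_on_def)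
  qed
  show ?thesis unfolding lewis_realization_def using linst real inj by blast
qed

end
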